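(* Let $G\in\mathbb{F}_3^{k\times n}$ be a matrix of rank $k$, let $B\subseteq\mathbb{F}_3^k$ be the set of columns of $G$ and let $C\subseteq\mathbb{F}_3^n$ be the row space of $G$. Then $C$ is a linear trifferent code if and only if $\{\vec 0\}\cup B\cup -B$ is a $2$-blocking set in $\mathbb{F}_3^k$.
   Context: A linear trifferent code is a linear subspace $C\subseteq\mathbb{F}_3^n$ such that for any three distinct $x,y,z\in C$ there is a coordinate $i$ with $\{x_i,y_i,z_i\}=\mathbb{F}_3$. A $2$-blocking set in $\mathbb{F}_3^k$ is a set of points meeting every affine subspace (translate of a vector subspace) of dimension $k-2$. *)

theory Defs
  imports "Jordan_Normal_Form.DL_Rank"
begin

text \<open>Vectors of F^n are elements of carrier_vec n (type 'a vec), where the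
  scalar field 'a is any field with exactly three elements (i.e. F_3).\<close>

definition trifferent :: "nat \<Rightarrow> 'a vec set \<Rightarrow> bool" where
  "trifferent n C \<longleftrightarrow>
     (\<forall>x\<in>C. \<forall>y\<in>C. \<forall>z\<in>C. x \<noteq> y \<and> y \<noteq> z \<and> x \<noteq> z \<longrightarrow>
        (\<exists>i<n. {x $ i, y $ i, z $ i} = (UNIV :: 'a set)))"

definition linear_trifferent_code :: "nat \<Rightarrow> 'a::field vec set \<Rightarrow> bool" where
  "linear_trifferent_code n C \<longleftrightarrow>
     subspace class_ring C (module_vec TYPE('a) n) \<and> trifferent n C"

definition lin_subspace_dim :: "nat \<Rightarrow> nat \<Rightarrow> 'a::field vec set \<Rightarrow> bool" where
  "lin_subspace_dim k d W \<longleftrightarrow>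
     subspace class_ring W (module_vec TYPE('a) k) \<and>
     vectorspace.dim class_ring ((module_vec TYPE('a) k)\<lparr>carrier := W\<rparr>) = d"

definition affine_subspace_dim :: "nat \<Rightarrow> nat \<Rightarrow> 'a::field vec set \<Rightarrow> bool" where
  "affine_subspace_dim k d A \<longleftrightarrow>
     (\<exists>a \<in> carrier_vec k. \<exists>W. lin_subspace_dim k d W \<and> A = (\<lambda>w. a + w) ` W)"

text \<open>A 2-blocking set in F^k: meets every affine subspace of dimension k - 2
  (for k < 2 there is no such dimension and the condition is vacuous).\<close>
definition two_blocking_set :: "nat \<Rightarrow> 'a::field vec set \<Rightarrow> bool" where
  "two_blocking_set k S \<longleftrightarrow> S \<subseteq> carrier_vec k \<and>
     (\<forall>d A. d + 2 = k \<and> affine_subspace_dim k d A \<longrightarrow> S \<inter> A \<noteq> {})"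

end

theory Submission
  imports Defs
begin


lemma F3_facts:
  assumes "card (UNIV :: 'a::field set) = 3"
  shows "\<And>z::'a. z = 0 \<or> z = 1 \<or> z = -1" and "(1::'a) \<noteq> -1" and "(1::'a) + 1 = -1"
proof -
  have fin: "finite (UNIV :: 'a set)" using assms card.infinite by fastforce
  have ne: "(1::'a) \<noteq> -1"
  proof
    assume h: "(1::'a) = -1"
    have "\<not> (UNIV :: 'a set) \<subseteq> {0,1}"
    proof
      assume "(UNIV :: 'a set) \<subseteq> {0,1}"
      then have "card (UNIV :: 'a set) \<le> card {0::'a,1}" by (intro card_mono) auto
      also have "\<dots> = 2" by simp
      finally show False using assms by simp
    qed
    then obtain a :: 'a where a: "a \<noteq> 0" "a \<noteq> 1" by auto
    have "a + 1 \<noteq> 0"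
    proof
      assume "a + 1 = 0"
      then have "a = -1" by (simp add: eq_neg_iff_add_eq_0)
      then show False using a h by simp
    qed
    moreover have "a + 1 \<noteq> 1" using a by simp
    moreover have "a + 1 \<noteq> a" by simp
    ultimately have "card {0::'a, 1, a, a+1} = 4" using a by (simp add: eq_commute[of 0 "a+1"] eq_commute[of 1 "a+1"])
    moreover have "card {0::'a, 1, a, a+1} \<le> 3" using assms fin card_mono[OF fin, of "{0::'a, 1, a, a+1}"] by simp
    ultimately show False by simp
  qed
  have U: "(UNIV :: 'a set) = {0,1,-1}"
  proof -
    have "card {0::'a,1,-1} = 3" using ne by simp
    then show ?thesis using assms fin card_subset_eq[OF fin, of "{0::'a,1,-1}"] by simp
  qed
  show "\<And>z::'a. z = 0 \<or> z = 1 \<or> z = -1" using U by auto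
  show "(1::'a) \<noteq> -1" by (rule ne)
  have "(1::'a) + 1 \<in> {0,1,-1}" using U by auto
  moreover have "(1::'a) + 1 \<noteq> 0" using ne by (simp add: add_eq_0_iff2)
  moreover have "(1::'a) + 1 \<noteq> 1" by (metis add_cancel_right_right one_neq_zero)
  ultimately show "(1::'a) + 1 = -1" by auto
qed

lemma (in vectorspace) subspace_full_dim:
  assumes fd: "fin_dim" and sub: "subspace K X V" and fdX: "vectorspace.fin_dim K (vs X)"
    and d: "vectorspace.dim K (vs X) = dim"
  shows "X = carrier V"
proof -
  interpret X: vectorspace K "vs X" using sub subspace_is_vs by auto
  have sm: "submodule K X V" using sub unfolding subspace_def by auto
  obtain b where b: "finite b" "X.basis b" using X.finite_basis_exists[OF fdX] by blast
  have bX: "b \<subseteq> X" using b(2) unfolding X.basis_def by auto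
  have XV: "X \<subseteq> carrier V" using sm unfolding submodule_def by auto
  have li: "lin_indpt b"
    using b(2) span_li_not_depend(2)[OF bX sm] unfolding X.basis_def by auto
  have cb: "card b = dim" using X.dim_basis[OF b(1) b(2)] d by simp
  have "basis b" using dim_li_is_basis[OF fd b(1) _ li] bX XV cb by auto
  then have "span b = carrier V" unfolding basis_def by auto
  moreover have "span b \<subseteq> X" using span_is_subset[OF bX sm] .
  ultimately show ?thesis using XV by auto
qed

lemma (in vectorspace) fin_dim_of_finite:
  assumes fin: "finite (carrier V)" and sub: "subspace K X V"
  shows "vectorspace.fin_dim K (vs X)"
proof -
  interpret X: vectorspace K "vs X" using sub subspace_is_vs by auto
  have sm: "submodule K X V" using sub unfolding subspace_def by auto
  have XV: "X \<subseteq> carrier V" using sm unfolding submodule_def by auto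
  have "X.span X = X" using X.span_is_subset2[of X] X.in_own_span[of X] by auto
  then show ?thesis unfolding X.fin_dim_def using finite_subset[OF XV fin] by auto
qed

lemma finite_carrier_vec:
  assumes "finite (UNIV :: 'a set)"
  shows "finite (carrier_vec k :: 'a vec set)"
proof -
  have "carrier_vec k \<subseteq> vec_of_list ` {xs :: 'a list. set xs \<subseteq> UNIV \<and> length xs = k}"
  proof
    fix v :: "'a vec" assume "v \<in> carrier_vec k"
    then show "v \<in> vec_of_list ` {xs. set xs \<subseteq> UNIV \<and> length xs = k}"
      by (intro image_eqI[of _ _ "list_of_vec v"]) (auto simp: vec_list)
  qed
  moreover have "finite {xs :: 'a list. set xs \<subseteq> UNIV \<and> length xs = k}"
    using finite_lists_length_eq[OF assms] by simp
  ultimately show ?thesis by (meson finite_imageI finite_subset)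
qed

lemma functionals_rank_nullity:
  fixes f :: "nat \<Rightarrow> 'a::field vec"
  assumes f: "\<And>j. j < m \<Longrightarrow> f j \<in> carrier_vec k"
  defines "T \<equiv> \<lambda>w. vec m (\<lambda>j. f j \<bullet> w)"
  defines "Ker \<equiv> {w \<in> carrier_vec k. \<forall>j<m. f j \<bullet> w = 0}"
  shows "vectorspace.dim class_ring ((module_vec TYPE('a) m)\<lparr>carrier := T ` carrier_vec k\<rparr>)
       + vectorspace.dim class_ring ((module_vec TYPE('a) k)\<lparr>carrier := Ker\<rparr>) = k"
    and "subspace class_ring Ker (module_vec TYPE('a) k)"
    and "subspace class_ring (T ` carrier_vec k) (module_vec TYPE('a) m)"
proof -
  have hom: "T \<in> LinearCombinations.module_hom class_ring (module_vec TYPE('a) k) (module_vec TYPE('a) m)"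
    unfolding LinearCombinations.module_hom_def
  proof (intro CollectI conjI allI impI)
    show "T \<in> carrier (module_vec TYPE('a) k) \<rightarrow> carrier (module_vec TYPE('a) m)"
      unfolding T_def module_vec_simps by auto
    fix m1 m2 assume "m1 \<in> carrier (module_vec TYPE('a) k) \<and> m2 \<in> carrier (module_vec TYPE('a) k)"
    then have m: "m1 \<in> carrier_vec k" "m2 \<in> carrier_vec k" unfolding module_vec_simps by auto
    show "T (m1 \<oplus>\<^bsub>module_vec TYPE('a) k\<^esub> m2) = T m1 \<oplus>\<^bsub>module_vec TYPE('a) m\<^esub> T m2"
      unfolding module_vec_simps T_def
      by (rule eq_vecI) (auto simp: scalar_prod_add_distrib[OF f m(1) m(2)])
  next
    fix r :: 'a and m1 assume "r \<in> carrier class_ring \<and> m1 \<in> carrier (module_vec TYPE('a) k)"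
    then have m: "m1 \<in> carrier_vec k" unfolding module_vec_simps by auto
    show "T (r \<odot>\<^bsub>module_vec TYPE('a) k\<^esub> m1) = r \<odot>\<^bsub>module_vec TYPE('a) m\<^esub> T m1"
      unfolding module_vec_simps T_def
      by (rule eq_vecI) (auto simp: scalar_prod_smult_distrib[OF f m])
  qed
  interpret L: linear_map class_ring "module_vec TYPE('a) k" "module_vec TYPE('a) m" T
    unfolding linear_map_def mod_hom_def mod_hom_axioms_def
    using vec_vs vec_module hom by blast
  interpret Vk: vec_space "TYPE('a)" k .
  have ker: "L.kerT = Ker"
    unfolding L.ker_def unfolding Ker_def module_vec_simps T_def
    by (auto simp: vec_eq_iff)
  have im: "L.imT = T ` carrier_vec k"
    unfolding L.im_def unfolding module_vec_simps by simp
  have "L.V.dim = k" using Vk.dim_is_n by simp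
  then show "vectorspace.dim class_ring ((module_vec TYPE('a) m)\<lparr>carrier := T ` carrier_vec k\<rparr>)
       + vectorspace.dim class_ring ((module_vec TYPE('a) k)\<lparr>carrier := Ker\<rparr>) = k"
    using L.rank_nullity Vk.fin_dim ker im by simp
  show "subspace class_ring Ker (module_vec TYPE('a) k)" using L.kerT_is_subspace ker by simp
  show "subspace class_ring (T ` carrier_vec k) (module_vec TYPE('a) m)" using L.imT_is_subspace im by simp
qed

definition indep2 :: "'a::field vec \<Rightarrow> 'a vec \<Rightarrow> bool" where
  "indep2 x y \<longleftrightarrow> (\<forall>s t. s \<cdot>\<^sub>v x + t \<cdot>\<^sub>v y = 0\<^sub>v (dim_vec x) \<longrightarrow> s = 0 \<and> t = 0)"

lemma solve2:
  fixes x y :: "'a::field vec"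
  assumes x: "x \<in> carrier_vec k" and y: "y \<in> carrier_vec k" and ind: "indep2 x y"
  shows "\<exists>a\<in>carrier_vec k. x \<bullet> a = \<alpha> \<and> y \<bullet> a = \<beta>"
proof -
  have dx: "dim_vec x = k" using x by simp
  have "x \<noteq> 0\<^sub>v k"
  proof
    assume "x = 0\<^sub>v k"
    then have "1 \<cdot>\<^sub>v x + 0 \<cdot>\<^sub>v y = 0\<^sub>v (dim_vec x)" using y by (auto simp: vec_eq_iff)
    then show False using ind[unfolded indep2_def, rule_format, of 1 0] by simp
  qed
  then obtain i where i: "i < k" "x $ i \<noteq> 0" using x by (auto simp: vec_eq_iff)
  define c where "c = y $ i / x $ i"
  have zi: "y $ i - c * x $ i = 0" using i unfolding c_def by simp
  have "\<exists>j<k. y $ j - c * x $ j \<noteq> 0"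
  proof (rule ccontr)
    assume "\<not> ?thesis"
    then have h: "\<forall>j<k. y $ j - c * x $ j = 0" by auto
    have "(- c) \<cdot>\<^sub>v x + 1 \<cdot>\<^sub>v y = 0\<^sub>v (dim_vec x)"
      using x y h by (intro eq_vecI) (auto simp: algebra_simps)
    then show False using ind[unfolded indep2_def, rule_format, of "-c" 1] by simp
  qed
  then obtain j where j: "j < k" "y $ j - c * x $ j \<noteq> 0" by auto
  have ij: "i \<noteq> j" using zi j by auto
  define D where "D = x $ i * y $ j - y $ i * x $ j"
  have D: "D = x $ i * (y $ j - c * x $ j)" unfolding D_def c_def using i(2) by (simp add: algebra_simps)
  have D0: "D \<noteq> 0" unfolding D using i j by simp
  define p where "p = (\<alpha> * y $ j - \<beta> * x $ j) / D"
  define q where "q = (x $ i * \<beta> - y $ i * \<alpha>) / D"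
  define a where "a = p \<cdot>\<^sub>v unit_vec k i + q \<cdot>\<^sub>v unit_vec k j"
  have a: "a \<in> carrier_vec k" unfolding a_def by simp
  have xa: "x \<bullet> a = p * x $ i + q * x $ j"
    unfolding a_def using x i j by (simp add: scalar_prod_add_distrib[of _ k])
  have ya: "y \<bullet> a = p * y $ i + q * y $ j"
    unfolding a_def using y i j by (simp add: scalar_prod_add_distrib[of _ k])
  have "p * x $ i + q * x $ j = ((\<alpha> * y $ j - \<beta> * x $ j) * x $ i + (x $ i * \<beta> - y $ i * \<alpha>) * x $ j) / D"
    unfolding p_def q_def by (simp add: add_divide_distrib)
  also have "\<dots> = \<alpha> * D / D" unfolding D_def by (simp add: algebra_simps)
  also have "\<dots> = \<alpha>" using D0 by simp
  finally have 1: "p * x $ i + q * x $ j = \<alpha>" .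
  have "p * y $ i + q * y $ j = ((\<alpha> * y $ j - \<beta> * x $ j) * y $ i + (x $ i * \<beta> - y $ i * \<alpha>) * y $ j) / D"
    unfolding p_def q_def by (simp add: add_divide_distrib)
  also have "\<dots> = \<beta> * D / D" unfolding D_def by (simp add: algebra_simps)
  also have "\<dots> = \<beta>" using D0 by simp
  finally have 2: "p * y $ i + q * y $ j = \<beta>" .
  show ?thesis using a xa ya 1 2 by auto
qed

lemma module_vec_self: "(module_vec TYPE('a::field) n)\<lparr>carrier := carrier_vec n\<rparr> = module_vec TYPE('a) n"
  by (simp add: module_vec_def)


lemma ann_pair:
  fixes x y :: "'a::field vec"
  assumes x: "x \<in> carrier_vec k" and y: "y \<in> carrier_vec k" and ind: "indep2 x y"
  shows "lin_subspace_dim k (k - 2) {w \<in> carrier_vec k. x \<bullet> w = 0 \<and> y \<bullet> w = 0}" and "2 \<le> k"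
proof -
  define f where "f = (\<lambda>j::nat. if j = 0 then x else y)"
  have f: "\<And>j. j < 2 \<Longrightarrow> f j \<in> carrier_vec k" unfolding f_def using x y by auto
  define T where "T = (\<lambda>w. vec 2 (\<lambda>j. f j \<bullet> w))"
  have Ker: "{w \<in> carrier_vec k. \<forall>j<2. f j \<bullet> w = 0} = {w \<in> carrier_vec k. x \<bullet> w = 0 \<and> y \<bullet> w = 0}"
    unfolding f_def by (auto simp: less_2_cases_iff)
  have im: "T ` carrier_vec k = carrier_vec 2"
  proof
    show "T ` carrier_vec k \<subseteq> carrier_vec 2" unfolding T_def by auto
    show "carrier_vec 2 \<subseteq> T ` carrier_vec k"
    proof
      fix v :: "'a vec" assume v: "v \<in> carrier_vec 2"
      obtain a where a: "a \<in> carrier_vec k" "x \<bullet> a = v $ 0" "y \<bullet> a = v $ 1"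
        using solve2[OF x y ind] by blast
      have "T a = v" unfolding T_def f_def using v a by (intro eq_vecI) (auto simp: less_2_cases_iff)
      then show "v \<in> T ` carrier_vec k" using a by blast
    qed
  qed
  have d2: "vectorspace.dim class_ring ((module_vec TYPE('a) 2)\<lparr>carrier := carrier_vec 2\<rparr>) = 2"
    unfolding module_vec_self using vec_space.dim_is_n by metis
  note rn = functionals_rank_nullity[of 2 f k, OF f, folded T_def, unfolded Ker im]
  have "vectorspace.dim class_ring ((module_vec TYPE('a) k)\<lparr>carrier := {w \<in> carrier_vec k. x \<bullet> w = 0 \<and> y \<bullet> w = 0}\<rparr>) + 2 = k"
    using rn(1) d2 by simp
  then show "lin_subspace_dim k (k - 2) {w \<in> carrier_vec k. x \<bullet> w = 0 \<and> y \<bullet> w = 0}" "2 \<le> k"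
    unfolding lin_subspace_dim_def using rn(2) by auto
qed

lemma li_pair_indep2:
  fixes x y :: "'a::field vec"
  assumes x: "x \<in> carrier_vec k" and y: "y \<in> carrier_vec k" and xy: "x \<noteq> y"
    and li: "\<not> LinearCombinations.module.lin_dep class_ring (module_vec TYPE('a) k) {x,y}"
  shows "indep2 x y"
  unfolding indep2_def
proof (intro allI impI)
  interpret Vk: vec_space "TYPE('a)" k .
  fix s t assume eq: "s \<cdot>\<^sub>v x + t \<cdot>\<^sub>v y = 0\<^sub>v (dim_vec x)"
  define a where "a = (\<lambda>v. if v = x then s else t)"
  have lc: "Vk.lincomb a {x,y} = s \<cdot>\<^sub>v x + t \<cdot>\<^sub>v y"
  proof -
    have "Vk.lincomb a {x,y} = a x \<cdot>\<^sub>v x + Vk.lincomb a {y}"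
      using Vk.lincomb_insert2[where S="{y}" and a=a and v=x] x y xy by auto
    also have "Vk.lincomb a {y} = a y \<cdot>\<^sub>v y"
      using Vk.lincomb_insert2[where S="{}" and a=a and v=y] y by auto
    finally show ?thesis unfolding a_def using xy by simp
  qed
  show "s = 0 \<and> t = 0"
  proof (rule ccontr)
    assume st: "\<not> (s = 0 \<and> t = 0)"
    have "Vk.lin_dep {x,y}"
    proof (cases "s = 0")
      case True
      then show ?thesis using st lc eq x y
        by (intro Vk.lin_dep_crit[where A="{x,y}" and S="{x,y}" and a=a and v=y]) (auto simp: a_def xy[symmetric])
    next
      case False
      then show ?thesis using st lc eq x y
        by (intro Vk.lin_dep_crit[where A="{x,y}" and S="{x,y}" and a=a and v=x]) (auto simp: a_def)
    qed
    then show False using li by simp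
  qed
qed

lemma complement_pair:
  fixes W :: "'a::field vec set"
  assumes fin: "finite (UNIV :: 'a set)" and W: "lin_subspace_dim k d W" and kd: "d + 2 = k"
  shows "\<exists>x\<in>carrier_vec k. \<exists>y\<in>carrier_vec k. indep2 x y \<and>
           W = {w \<in> carrier_vec k. x \<bullet> w = 0 \<and> y \<bullet> w = 0}"
proof -
  interpret Vk: vec_space "TYPE('a)" k .
  have subW: "subspace class_ring W Vk.V" and dW: "vectorspace.dim class_ring (Vk.vs W) = d"
    using W unfolding lin_subspace_dim_def by auto
  have finV: "finite (carrier_vec k :: 'a vec set)" using finite_carrier_vec[OF fin] by simp
  interpret KW: vectorspace class_ring "Vk.vs W" using Vk.subspace_is_vs subW by auto
  have fdW: "KW.fin_dim" using Vk.fin_dim_of_finite[OF finV subW] .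
  obtain b where b: "finite b" "KW.basis b" using KW.finite_basis_exists[OF fdW] by blast
  have cb: "card b = d" using KW.dim_basis[OF b] dW by simp
  have bW: "b \<subseteq> W" using b(2) unfolding KW.basis_def by auto
  have smW: "submodule class_ring W Vk.V" using subW unfolding subspace_def by auto
  have WV: "W \<subseteq> carrier_vec k" using smW unfolding submodule_def by auto
  have spanb: "Vk.span b = W"
    using b(2) Vk.span_li_not_depend(1)[OF bW smW] unfolding KW.basis_def by auto
  obtain ws where ws: "set ws = b" "distinct ws" using finite_distinct_list[OF b(1)] by blast
  have lw: "length ws = d" using distinct_card[OF ws(2)] ws(1) cb by simp
  have f: "\<And>j. j < d \<Longrightarrow> ws ! j \<in> carrier_vec k" using lw ws(1) bW WV nth_mem by blast
  define T where "T = (\<lambda>w. vec d (\<lambda>j. ws ! j \<bullet> w))"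
  define Ker where "Ker = {w \<in> carrier_vec k. \<forall>j<d. ws ! j \<bullet> w = 0}"
  note rn = functionals_rank_nullity[of d "\<lambda>j. ws ! j" k, OF f, folded T_def Ker_def]
  interpret Vd: vec_space "TYPE('a)" d .
  have finVd: "finite (carrier_vec d :: 'a vec set)" using finite_carrier_vec[OF fin] by simp
  have "vectorspace.dim class_ring (Vd.vs (T ` carrier_vec k)) \<le> d"
    using Vd.subspace_dim[OF rn(3) Vd.fin_dim Vd.fin_dim_of_finite[OF finVd rn(3)]] Vd.dim_is_n by simp
  then have dK: "2 \<le> vectorspace.dim class_ring (Vk.vs Ker)" using rn(1) kd by linarith
  interpret KK: vectorspace class_ring "Vk.vs Ker" using rn(2) Vk.subspace_is_vs by auto
  have fdK: "KK.fin_dim" using Vk.fin_dim_of_finite[OF finV rn(2)] .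
  obtain bk where bk: "finite bk" "KK.basis bk" using KK.finite_basis_exists[OF fdK] by blast
  have cbk: "2 \<le> card bk" using KK.dim_basis[OF bk] dK by simp
  then obtain x y where xy: "x \<in> bk" "y \<in> bk" "x \<noteq> y"
    using card_le_Suc0_iff_eq[OF bk(1)] by fastforce
  have bkK: "bk \<subseteq> Ker" using bk(2) unfolding KK.basis_def by auto
  have smK: "submodule class_ring Ker Vk.V" using rn(2) unfolding subspace_def by auto
  have KV: "Ker \<subseteq> carrier_vec k" unfolding Ker_def by auto
  have li: "\<not> Vk.lin_dep bk"
    using bk(2) Vk.span_li_not_depend(2)[OF bkK smK] unfolding KK.basis_def by auto
  have li2: "\<not> Vk.lin_dep {x,y}" using Vk.subset_li_is_li[OF li] xy by auto
  have xK: "x \<in> Ker" and yK: "y \<in> Ker" using xy bkK by auto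
  then have xc: "x \<in> carrier_vec k" and yc: "y \<in> carrier_vec k" using KV by auto
  have ind: "indep2 x y" using li_pair_indep2[OF xc yc xy(3) li2] .
  define Ann where "Ann = {w \<in> carrier_vec k. x \<bullet> w = 0 \<and> y \<bullet> w = 0}"
  have ann: "lin_subspace_dim k (k - 2) Ann" using ann_pair(1)[OF xc yc ind] unfolding Ann_def .
  have subA: "subspace class_ring Ann Vk.V" and dA: "vectorspace.dim class_ring (Vk.vs Ann) = d"
    using ann kd unfolding lin_subspace_dim_def by auto
  have smA: "submodule class_ring Ann Vk.V" using subA unfolding subspace_def by auto
  have bA: "b \<subseteq> Ann"
  proof
    fix w assume w: "w \<in> b"
    then obtain j where j: "j < d" "w = ws ! j" using ws(1) lw by (metis in_set_conv_nth)
    have wc: "w \<in> carrier_vec k" using w bW WV by auto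
    have "w \<bullet> x = 0" "w \<bullet> y = 0" using xK yK j unfolding Ker_def by auto
    then show "w \<in> Ann" unfolding Ann_def using wc comm_scalar_prod[OF wc xc] comm_scalar_prod[OF wc yc] by auto
  qed
  have WA: "W \<subseteq> Ann" using Vk.span_is_subset[OF bA smA] spanb by simp
  interpret KA: vectorspace class_ring "Vk.vs Ann" using subA Vk.subspace_is_vs by auto
  have sub': "subspace class_ring W (Vk.vs Ann)" using Vk.nested_subspaces[OF subA subW WA] .
  have fdA: "KA.fin_dim" using Vk.fin_dim_of_finite[OF finV subA] .
  have "W = carrier (Vk.vs Ann)"
    by (rule KA.subspace_full_dim[OF fdA sub']) (use fdW dW dA in simp_all)
  then have "W = Ann" by simp
  then show ?thesis using xc yc ind unfolding Ann_def by blast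
qed



lemma F3_univ:
  assumes c: "card (UNIV :: 'a::field set) = 3"
  shows "{u, v, w :: 'a} = UNIV \<longleftrightarrow> u \<noteq> v \<and> v \<noteq> w \<and> u \<noteq> w"
proof -
  have fin: "finite (UNIV :: 'a set)" using c card.infinite by fastforce
  show ?thesis
  proof
    assume h: "{u, v, w} = UNIV"
    have "card {u,v,w} = 3" using h c by simp
    moreover have "card {u,v,w} \<le> 2" if "u = v \<or> v = w \<or> u = w"
    proof -
      have "{u,v,w} = {u,w} \<or> {u,v,w} = {u,v}" using that by auto
      moreover have "card {u,w} \<le> 2" "card {u,v} \<le> 2" by (simp_all add: card_insert_le_m1)
      ultimately show ?thesis by auto
    qed
    ultimately show "u \<noteq> v \<and> v \<noteq> w \<and> u \<noteq> w" by fastforce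
  next
    assume "u \<noteq> v \<and> v \<noteq> w \<and> u \<noteq> w"
    then have "card {u,v,w} = 3" by simp
    then show "{u, v, w} = UNIV" using c fin card_subset_eq[OF fin, of "{u,v,w}"] by simp
  qed
qed

lemma F3_key:
  assumes c: "card (UNIV :: 'a::field set) = 3"
    and h1: "\<alpha> * s + \<beta> * t \<noteq> 0" and h2: "(\<beta> - \<alpha>) * s + (- \<alpha> - \<beta>) * t \<noteq> (0::'a)"
    and h3: "\<alpha> * s + \<beta> * t \<noteq> (\<beta> - \<alpha>) * s + (- \<alpha> - \<beta>) * t"
  shows "\<exists>\<sigma>\<in>{1,-1}. s = \<sigma> * \<alpha> \<and> t = \<sigma> * \<beta>"
proof -
  note F = F3_facts[OF c]
  have two: "(2::'a) = -1" using F(3) by (simp add: one_add_one)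
  have ne: "(1::'a) \<noteq> -1" "(-1::'a) \<noteq> 1" using F(2) by auto
  have three: "(3::'a) = 0" proof - have "(3::'a) = 2 + 1" by simp then show ?thesis using two by simp qed
  have four: "(4::'a) = 1" proof - have "(4::'a) = 3 + 1" by simp then show ?thesis using three by simp qed
  have ne2: "(2::'a) \<noteq> 1" "(2::'a) \<noteq> 0" "(-2::'a) \<noteq> -1" "(-2::'a) = 1"
    by (subst two, use ne in simp)+
  show ?thesis
    using F(1)[of \<alpha>] F(1)[of \<beta>] F(1)[of s] F(1)[of t] h1 h2 h3 ne two ne2 three four
    by (elim disjE) (simp_all add: algebra_simps)
qed

lemma F3_combo:
  assumes c: "card (UNIV :: 'a::field set) = 3"
  shows "\<beta> - \<alpha> = 0 \<and> - \<alpha> - \<beta> = (0::'a) \<Longrightarrow> \<alpha> = 0 \<and> \<beta> = 0"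
    and "\<alpha> - (\<beta> - \<alpha>) = 0 \<and> \<beta> - (- \<alpha> - \<beta>) = (0::'a) \<Longrightarrow> \<alpha> = 0 \<and> \<beta> = 0"
proof -
  note F = F3_facts[OF c]
  have two: "(2::'a) = -1" using F(3) by (simp add: one_add_one)
  have ne: "(1::'a) \<noteq> -1" "(-1::'a) \<noteq> 1" using F(2) by auto
  have three: "(3::'a) = 0" proof - have "(3::'a) = 2 + 1" by simp then show ?thesis using two by simp qed
  have four: "(4::'a) = 1" proof - have "(4::'a) = 3 + 1" by simp then show ?thesis using three by simp qed
  have ne2: "(2::'a) \<noteq> 1" "(2::'a) \<noteq> 0" "(-2::'a) \<noteq> -1" "(-2::'a) = 1"
    by (subst two, use ne in simp)+
  show "\<beta> - \<alpha> = 0 \<and> - \<alpha> - \<beta> = (0::'a) \<Longrightarrow> \<alpha> = 0 \<and> \<beta> = 0"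
    using F(1)[of \<alpha>] F(1)[of \<beta>] ne two ne2 three four by (elim disjE) (simp_all add: algebra_simps)
  show "\<alpha> - (\<beta> - \<alpha>) = 0 \<and> \<beta> - (- \<alpha> - \<beta>) = (0::'a) \<Longrightarrow> \<alpha> = 0 \<and> \<beta> = 0"
    using F(1)[of \<alpha>] F(1)[of \<beta>] ne two ne2 three four by (elim disjE) (simp_all add: algebra_simps)
qed

definition core :: "'a::field mat \<Rightarrow> nat \<Rightarrow> nat \<Rightarrow> bool" where
  "core G k n \<longleftrightarrow> (\<forall>x\<in>carrier_vec k. \<forall>y\<in>carrier_vec k. indep2 x y \<longrightarrow>
     (\<forall>\<alpha> \<beta>. (\<alpha> \<noteq> 0 \<or> \<beta> \<noteq> 0) \<longrightarrow> (\<exists>i<n. \<exists>\<sigma>\<in>{1,-1}. x \<bullet> col G i = \<sigma> * \<alpha> \<and> y \<bullet> col G i = \<sigma> * \<beta>)))"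

lemma set_cols_eq: assumes "G \<in> carrier_mat k n" shows "set (cols G) = {col G i | i. i < n}"
  using assms by (auto simp: cols_def)

lemma blocking_iff_core:
  fixes G :: "'a::field mat"
  assumes fin: "finite (UNIV :: 'a set)" and G: "G \<in> carrier_mat k n"
  shows "two_blocking_set k ({0\<^sub>v k} \<union> set (cols G) \<union> uminus ` set (cols G)) \<longleftrightarrow> core G k n"
proof
  let ?S = "{0\<^sub>v k} \<union> set (cols G) \<union> uminus ` set (cols G)"
  have colc: "\<And>i. i < n \<Longrightarrow> col G i \<in> carrier_vec k" using G by auto
  assume bl: "two_blocking_set k ?S"
  show "core G k n" unfolding core_def
  proof (intro ballI impI allI)
    fix x y :: "'a vec" and \<alpha> \<beta> :: 'a
    assume x: "x \<in> carrier_vec k" and y: "y \<in> carrier_vec k" and ind: "indep2 x y" and ab: "\<alpha> \<noteq> 0 \<or> \<beta> \<noteq> 0"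
    define Ann where "Ann = {w \<in> carrier_vec k. x \<bullet> w = 0 \<and> y \<bullet> w = 0}"
    have ann: "lin_subspace_dim k (k - 2) Ann" and k2: "2 \<le> k" using ann_pair[OF x y ind] unfolding Ann_def by auto
    obtain a where a: "a \<in> carrier_vec k" "x \<bullet> a = \<alpha>" "y \<bullet> a = \<beta>" using solve2[OF x y ind] by blast
    have "affine_subspace_dim k (k - 2) ((\<lambda>w. a + w) ` Ann)"
      unfolding affine_subspace_dim_def using a(1) ann by blast
    moreover have "k - 2 + 2 = k" using k2 by simp
    ultimately have "?S \<inter> (\<lambda>w. a + w) ` Ann \<noteq> {}" using bl unfolding two_blocking_set_def by blast
    then obtain p w where p: "p \<in> ?S" and w: "w \<in> Ann" and pw: "p = a + w" by blast
    have wc: "w \<in> carrier_vec k" and xw: "x \<bullet> w = 0" and yw: "y \<bullet> w = 0" using w unfolding Ann_def by auto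
    have xp: "x \<bullet> p = \<alpha>" unfolding pw using scalar_prod_add_distrib[OF x a(1) wc] a xw by simp
    have yp: "y \<bullet> p = \<beta>" unfolding pw using scalar_prod_add_distrib[OF y a(1) wc] a yw by simp
    have "p \<noteq> 0\<^sub>v k"
    proof
      assume "p = 0\<^sub>v k"
      then have "\<alpha> = 0" "\<beta> = 0" using xp yp x y by auto
      then show False using ab by simp
    qed
    then have "p \<in> set (cols G) \<or> p \<in> uminus ` set (cols G)" using p by auto
    then obtain i where i: "i < n" and pi: "p = col G i \<or> p = - col G i"
      unfolding set_cols_eq[OF G] by auto
    show "\<exists>i<n. \<exists>\<sigma>\<in>{1,-1}. x \<bullet> col G i = \<sigma> * \<alpha> \<and> y \<bullet> col G i = \<sigma> * \<beta>"
    proof (rule exI[of _ i], intro conjI i)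
      show "\<exists>\<sigma>\<in>{1,-1}. x \<bullet> col G i = \<sigma> * \<alpha> \<and> y \<bullet> col G i = \<sigma> * \<beta>"
        using pi
      proof
        assume "p = col G i"
        then show ?thesis using xp yp by auto
      next
        assume "p = - col G i"
        then have "x \<bullet> col G i = - \<alpha>" "y \<bullet> col G i = - \<beta>"
          using xp yp x y colc[OF i] G by (auto simp: scalar_prod_uminus_right carrier_vecD)
        then show ?thesis by auto
      qed
    qed
  qed
next
  let ?S = "{0\<^sub>v k} \<union> set (cols G) \<union> uminus ` set (cols G)"
  have colc: "\<And>i. i < n \<Longrightarrow> col G i \<in> carrier_vec k" using G by auto
  assume co: "core G k n"
  have Sc: "?S \<subseteq> carrier_vec k" unfolding set_cols_eq[OF G] using colc by auto
  show "two_blocking_set k ?S" unfolding two_blocking_set_def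
  proof (intro conjI Sc allI impI)
    fix d :: nat and A :: "'a vec set" assume dA: "d + 2 = k \<and> affine_subspace_dim k d A"
    then obtain a W where a: "a \<in> carrier_vec k" and W: "lin_subspace_dim k d W" and A: "A = (\<lambda>w. a + w) ` W"
      unfolding affine_subspace_dim_def by blast
    obtain x y where x: "x \<in> carrier_vec k" and y: "y \<in> carrier_vec k" and ind: "indep2 x y"
      and WA: "W = {w \<in> carrier_vec k. x \<bullet> w = 0 \<and> y \<bullet> w = 0}"
      using complement_pair[OF fin W] dA by blast
    show "?S \<inter> A \<noteq> {}"
    proof (cases "x \<bullet> a = 0 \<and> y \<bullet> a = 0")
      case True
      have "- a \<in> W" unfolding WA using True a x y by auto
      moreover have "a + - a = 0\<^sub>v k" using a by auto
      ultimately have "0\<^sub>v k \<in> A" unfolding A by (metis image_eqI)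
      then show ?thesis by auto
    next
      case False
      then obtain i \<sigma> where i: "i < n" and \<sigma>: "\<sigma> \<in> {1,-1}" and xi: "x \<bullet> col G i = \<sigma> * (x \<bullet> a)"
        and yi: "y \<bullet> col G i = \<sigma> * (y \<bullet> a)"
        using co x y ind unfolding core_def by blast
      define p where "p = (if \<sigma> = 1 then col G i else - col G i)"
      have pS: "p \<in> ?S" unfolding p_def set_cols_eq[OF G] using i by auto
      have pc: "p \<in> carrier_vec k" unfolding p_def using colc[OF i] by auto
      have xp: "x \<bullet> p = x \<bullet> a" and yp: "y \<bullet> p = y \<bullet> a"
        unfolding p_def using \<sigma> xi yi x y colc[OF i] G by (auto simp: scalar_prod_uminus_right carrier_vecD)
      have "p - a \<in> W" unfolding WA using pc a x y xp yp
        by (auto simp: scalar_prod_minus_distrib[OF x pc a] scalar_prod_minus_distrib[OF y pc a])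
      moreover have "p = a + (p - a)" using pc a by auto
      ultimately have "p \<in> A" unfolding A by blast
      then show ?thesis using pS by blast
    qed
  qed
qed

lemma inj_cols:
  fixes G :: "'a::field mat"
  assumes G: "G \<in> carrier_mat k n" and rk: "vec_space.rank k G = k"
    and x: "x \<in> carrier_vec k" and h: "\<And>i. i < n \<Longrightarrow> col G i \<bullet> x = 0"
  shows "x = 0\<^sub>v k"
proof -
  interpret Vk: vec_space "TYPE('a)" k .
  have sc: "set (cols G) \<subseteq> carrier_vec k" using G by (auto simp: cols_def)
  have sub: "subspace class_ring (Vk.span (set (cols G))) Vk.V" using Vk.span_is_subspace sc by simp
  have sp: "Vk.span (set (cols G)) = carrier_vec k"
    by (rule Vk.subspace_full_dim[OF Vk.fin_dim sub Vk.fin_dim_span_cols[OF G]])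
      (use rk Vk.dim_is_n in \<open>simp add: Vk.rank_def\<close>)
  show ?thesis
  proof (rule eq_vecI)
    show "dim_vec x = dim_vec (0\<^sub>v k)" using x by simp
    fix j assume "j < dim_vec (0\<^sub>v k)"
    then have j: "j < k" by simp
    have "unit_vec k j \<in> Vk.col_space G" using sp j unfolding Vk.col_space_def by simp
    then obtain z where z: "z \<in> carrier_vec n" "G *\<^sub>v z = unit_vec k j"
      unfolding Vk.col_space_eq[OF G] using G by auto
    have "vec n (\<lambda>j. x \<bullet> col G j) = 0\<^sub>v n"
      using h x G by (intro eq_vecI) (auto simp: comm_scalar_prod[of x k])
    then have "0 = vec n (\<lambda>j. x \<bullet> col G j) \<bullet> z" using z by simp
    also have "\<dots> = x \<bullet> vec k (\<lambda>i. row G i \<bullet> z)" using assoc_scalar_prod[OF x G z(1)] .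
    also have "vec k (\<lambda>i. row G i \<bullet> z) = G *\<^sub>v z" using G unfolding mult_mat_vec_def by simp
    also have "x \<bullet> (G *\<^sub>v z) = x $ j" using z j by simp
    finally show "x $ j = 0\<^sub>v k $ j" using j by simp
  qed
qed





lemma inj2:
  fixes G :: "'a::field mat"
  assumes G: "G \<in> carrier_mat k n" and rk: "vec_space.rank k G = k"
    and x: "x \<in> carrier_vec k" and y: "y \<in> carrier_vec k" and ind: "indep2 x y"
    and h: "\<And>i. i < n \<Longrightarrow> s * (col G i \<bullet> x) + t * (col G i \<bullet> y) = 0"
  shows "s = 0 \<and> t = 0"
proof -
  have v: "s \<cdot>\<^sub>v x + t \<cdot>\<^sub>v y \<in> carrier_vec k" using x y by simp
  have "s \<cdot>\<^sub>v x + t \<cdot>\<^sub>v y = 0\<^sub>v k"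
  proof (rule inj_cols[OF G rk v])
    fix i assume i: "i < n"
    have ci: "col G i \<in> carrier_vec k" using G i by auto
    have "col G i \<bullet> (s \<cdot>\<^sub>v x + t \<cdot>\<^sub>v y) = s * (col G i \<bullet> x) + t * (col G i \<bullet> y)"
      using scalar_prod_add_distrib[OF ci, of "s \<cdot>\<^sub>v x" "t \<cdot>\<^sub>v y"] x y ci by simp
    then show "col G i \<bullet> (s \<cdot>\<^sub>v x + t \<cdot>\<^sub>v y) = 0" using h[OF i] by simp
  qed
  moreover have "dim_vec x = k" using x by simp
  ultimately show ?thesis using ind[unfolded indep2_def, rule_format, of s t] by simp
qed

lemma row_space_char:
  fixes G :: "'a::field mat"
  assumes G: "G \<in> carrier_mat k n"
  shows "vec_space.row_space n G = (\<lambda>y. G\<^sup>T *\<^sub>v y) ` carrier_vec k"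
    and "\<And>y i. i < n \<Longrightarrow> (G\<^sup>T *\<^sub>v y) $ i = col G i \<bullet> y"
    and "\<And>y. G\<^sup>T *\<^sub>v y \<in> carrier_vec n"
proof -
  interpret Vn: vec_space "TYPE('a)" n .
  show "Vn.row_space G = (\<lambda>y. G\<^sup>T *\<^sub>v y) ` carrier_vec k"
  proof -
    have "Vn.row_space G = {w \<in> carrier_vec (dim_col G). \<exists>y\<in>carrier_vec (dim_row G). G\<^sup>T *\<^sub>v y = w}"
      by (rule Vn.row_space_eq[OF G])
    also have "\<dots> = (\<lambda>y. G\<^sup>T *\<^sub>v y) ` carrier_vec k"
    proof (intro equalityI subsetI)
      fix w assume "w \<in> {w \<in> carrier_vec (dim_col G). \<exists>y\<in>carrier_vec (dim_row G). G\<^sup>T *\<^sub>v y = w}"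
      then obtain y where "y \<in> carrier_vec k" "w = G\<^sup>T *\<^sub>v y" using G by auto
      then show "w \<in> (\<lambda>y. G\<^sup>T *\<^sub>v y) ` carrier_vec k" by blast
    next
      fix w assume "w \<in> (\<lambda>y. G\<^sup>T *\<^sub>v y) ` carrier_vec k"
      then obtain y where y: "y \<in> carrier_vec k" "w = G\<^sup>T *\<^sub>v y" by blast
      have "dim_vec w = dim_col G" using y(2) by simp
      then show "w \<in> {w \<in> carrier_vec (dim_col G). \<exists>y\<in>carrier_vec (dim_row G). G\<^sup>T *\<^sub>v y = w}"
        using y G unfolding carrier_vec_def by auto
    qed
    finally show ?thesis .
  qed
  show "\<And>y i. i < n \<Longrightarrow> (G\<^sup>T *\<^sub>v y) $ i = col G i \<bullet> y"
  proof -
    fix y :: "'a vec" and i assume i: "i < n"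
    then have "i < dim_row G\<^sup>T" "i < dim_col G" using G by auto
    then show "(G\<^sup>T *\<^sub>v y) $ i = col G i \<bullet> y" by (simp only: index_mult_mat_vec row_transpose)
  qed
  show "\<And>y. G\<^sup>T *\<^sub>v y \<in> carrier_vec n" using G unfolding carrier_vec_def by simp
qed


lemma trifferent_imp_core:
  fixes G :: "'a::field mat"
  assumes c: "card (UNIV :: 'a set) = 3" and G: "G \<in> carrier_mat k n" and rk: "vec_space.rank k G = k"
    and tri: "trifferent n (vec_space.row_space n G)"
  shows "core G k n"
  unfolding core_def
proof (intro ballI impI allI)
  fix x y :: "'a vec" and \<alpha> \<beta> :: 'a
  assume x: "x \<in> carrier_vec k" and y: "y \<in> carrier_vec k" and ind: "indep2 x y" and ab: "\<alpha> \<noteq> 0 \<or> \<beta> \<noteq> 0"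
  note RS = row_space_char[OF G]
  have ci: "\<And>i. i < n \<Longrightarrow> col G i \<in> carrier_vec k" using G by auto
  have lin: "\<And>i a b. i < n \<Longrightarrow> col G i \<bullet> (a \<cdot>\<^sub>v x + b \<cdot>\<^sub>v y) = a * (col G i \<bullet> x) + b * (col G i \<bullet> y)"
  proof -
    fix i a b assume i: "i < n"
    show "col G i \<bullet> (a \<cdot>\<^sub>v x + b \<cdot>\<^sub>v y) = a * (col G i \<bullet> x) + b * (col G i \<bullet> y)"
      using scalar_prod_add_distrib[OF ci[OF i], of "a \<cdot>\<^sub>v x" "b \<cdot>\<^sub>v y"] x y ci[OF i] by simp
  qed
  define x' where "x' = \<alpha> \<cdot>\<^sub>v x + \<beta> \<cdot>\<^sub>v y"
  define y' where "y' = (\<beta> - \<alpha>) \<cdot>\<^sub>v x + (- \<alpha> - \<beta>) \<cdot>\<^sub>v y"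
  define u where "u = G\<^sup>T *\<^sub>v x'"
  define v where "v = G\<^sup>T *\<^sub>v y'"
  define w where "w = G\<^sup>T *\<^sub>v (0\<^sub>v k)"
  have x'c: "x' \<in> carrier_vec k" and y'c: "y' \<in> carrier_vec k" unfolding x'_def y'_def using x y by auto
  have uC: "u \<in> vec_space.row_space n G" and vC: "v \<in> vec_space.row_space n G"
    and wC: "w \<in> vec_space.row_space n G"
    unfolding RS(1) u_def v_def w_def using x'c y'c by auto
  have ui: "\<And>i. i < n \<Longrightarrow> u $ i = \<alpha> * (col G i \<bullet> x) + \<beta> * (col G i \<bullet> y)"
    unfolding u_def x'_def using RS(2) lin by simp
  have vi: "\<And>i. i < n \<Longrightarrow> v $ i = (\<beta> - \<alpha>) * (col G i \<bullet> x) + (- \<alpha> - \<beta>) * (col G i \<bullet> y)"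
    unfolding v_def y'_def using RS(2) lin by simp
  have wi: "\<And>i. i < n \<Longrightarrow> w $ i = 0"
    unfolding w_def using RS(2) ci by simp
  have du: "dim_vec u = n" and dv: "dim_vec v = n" and dw: "dim_vec w = n"
    using RS(3) unfolding u_def v_def w_def carrier_vec_def by auto
  have uw: "u \<noteq> w"
  proof
    assume "u = w"
    then have "\<And>i. i < n \<Longrightarrow> \<alpha> * (col G i \<bullet> x) + \<beta> * (col G i \<bullet> y) = 0" using ui wi by metis
    then show False using inj2[OF G rk x y ind] ab by blast
  qed
  have vw: "v \<noteq> w"
  proof
    assume "v = w"
    then have "\<And>i. i < n \<Longrightarrow> (\<beta> - \<alpha>) * (col G i \<bullet> x) + (- \<alpha> - \<beta>) * (col G i \<bullet> y) = 0" using vi wi by metis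
    then have "\<beta> - \<alpha> = 0 \<and> - \<alpha> - \<beta> = 0" using inj2[OF G rk x y ind] by blast
    then show False using F3_combo(1)[OF c] ab by blast
  qed
  have uv: "u \<noteq> v"
  proof
    assume "u = v"
    then have "\<And>i. i < n \<Longrightarrow> (\<alpha> - (\<beta> - \<alpha>)) * (col G i \<bullet> x) + (\<beta> - (- \<alpha> - \<beta>)) * (col G i \<bullet> y) = 0"
      using ui vi by (metis (no_types, lifting) diff_self left_diff_distrib add_diff_add)
    then have "\<alpha> - (\<beta> - \<alpha>) = 0 \<and> \<beta> - (- \<alpha> - \<beta>) = 0" using inj2[OF G rk x y ind] by blast
    then show False using F3_combo(2)[OF c] ab by blast
  qed
  obtain i where i: "i < n" and U: "{u $ i, v $ i, w $ i} = UNIV"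
    using tri uC vC wC uv vw uw unfolding trifferent_def by blast
  have d: "u $ i \<noteq> v $ i" "v $ i \<noteq> w $ i" "u $ i \<noteq> w $ i" using U F3_univ[OF c] by blast+
  have h1: "\<alpha> * (col G i \<bullet> x) + \<beta> * (col G i \<bullet> y) \<noteq> 0" using d(3) ui[OF i] wi[OF i] by simp
  have h2: "(\<beta> - \<alpha>) * (col G i \<bullet> x) + (- \<alpha> - \<beta>) * (col G i \<bullet> y) \<noteq> 0" using d(2) vi[OF i] wi[OF i] by simp
  have h3: "\<alpha> * (col G i \<bullet> x) + \<beta> * (col G i \<bullet> y) \<noteq> (\<beta> - \<alpha>) * (col G i \<bullet> x) + (- \<alpha> - \<beta>) * (col G i \<bullet> y)"
    using d(1) ui[OF i] vi[OF i] by simp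
  obtain \<sigma> where \<sigma>: "\<sigma> \<in> {1,-1}" "col G i \<bullet> x = \<sigma> * \<alpha>" "col G i \<bullet> y = \<sigma> * \<beta>"
    using F3_key[OF c h1 h2 h3] by blast
  show "\<exists>i<n. \<exists>\<sigma>\<in>{1,-1}. x \<bullet> col G i = \<sigma> * \<alpha> \<and> y \<bullet> col G i = \<sigma> * \<beta>"
    using i \<sigma> comm_scalar_prod[OF x ci[OF i]] comm_scalar_prod[OF y ci[OF i]] by auto
qed


lemma core_imp_trifferent:
  fixes G :: "'a::field mat"
  assumes c: "card (UNIV :: 'a set) = 3" and G: "G \<in> carrier_mat k n" and rk: "vec_space.rank k G = k"
    and co: "core G k n"
  shows "trifferent n (vec_space.row_space n G)"
  unfolding trifferent_def
proof (intro ballI impI)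
  note RS = row_space_char[OF G]
  note F = F3_facts[OF c]
  have ci: "\<And>i. i < n \<Longrightarrow> col G i \<in> carrier_vec k" using G by auto
  fix u v w assume uC: "u \<in> vec_space.row_space n G" and vC: "v \<in> vec_space.row_space n G"
    and wC: "w \<in> vec_space.row_space n G" and dist: "u \<noteq> v \<and> v \<noteq> w \<and> u \<noteq> w"
  obtain p0 where p0: "p0 \<in> carrier_vec k" "u = G\<^sup>T *\<^sub>v p0" using uC unfolding RS(1) by blast
  obtain q0 where q0: "q0 \<in> carrier_vec k" "v = G\<^sup>T *\<^sub>v q0" using vC unfolding RS(1) by blast
  obtain r0 where r0: "r0 \<in> carrier_vec k" "w = G\<^sup>T *\<^sub>v r0" using wC unfolding RS(1) by blast
  define p where "p = p0 - r0"
  define q where "q = q0 - r0"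
  have pc: "p \<in> carrier_vec k" and qc: "q \<in> carrier_vec k" unfolding p_def q_def using p0 q0 r0 by auto
  define P where "P = (\<lambda>i. col G i \<bullet> p)"
  define Q where "Q = (\<lambda>i. col G i \<bullet> q)"
  have ui: "\<And>i. i < n \<Longrightarrow> u $ i = w $ i + P i"
    unfolding P_def p_def using p0 r0 RS(2) scalar_prod_minus_distrib[OF ci p0(1) r0(1)] by simp
  have vi: "\<And>i. i < n \<Longrightarrow> v $ i = w $ i + Q i"
    unfolding Q_def q_def using q0 r0 RS(2) scalar_prod_minus_distrib[OF ci q0(1) r0(1)] by simp
  have du: "dim_vec u = n" and dv: "dim_vec v = n" and dw: "dim_vec w = n"
    using RS(3) p0 q0 r0 unfolding carrier_vec_def by auto
  have ex1: "\<exists>i<n. P i \<noteq> 0"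
  proof (rule ccontr)
    assume "\<not> ?thesis"
    then have "u = w" using ui du dw by (intro eq_vecI) auto
    then show False using dist by simp
  qed
  have ex2: "\<exists>i<n. Q i \<noteq> 0"
  proof (rule ccontr)
    assume "\<not> ?thesis"
    then have "v = w" using vi dv dw by (intro eq_vecI) auto
    then show False using dist by simp
  qed
  have ex3: "\<exists>i<n. P i \<noteq> Q i"
  proof (rule ccontr)
    assume "\<not> ?thesis"
    then have "u = v" using ui vi du dv by (intro eq_vecI) auto
    then show False using dist by simp
  qed
  have key: "\<exists>i<n. P i \<noteq> 0 \<and> Q i \<noteq> 0 \<and> P i \<noteq> Q i"
  proof (cases "indep2 p q")
    case True
    have "(1::'a) \<noteq> 0 \<or> (-1::'a) \<noteq> 0" by simp
    then obtain i \<sigma> where i: "i < n" and \<sigma>: "\<sigma> \<in> {1,-1}" and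
      pi: "p \<bullet> col G i = \<sigma> * 1" and qi: "q \<bullet> col G i = \<sigma> * -1"
      using co pc qc True unfolding core_def by blast
    have "P i = \<sigma>" "Q i = - \<sigma>" unfolding P_def Q_def
      using pi qi comm_scalar_prod[OF pc ci[OF i]] comm_scalar_prod[OF qc ci[OF i]] by auto
    then show ?thesis using i \<sigma> F(2) by auto
  next
    case False
    then obtain s t where st: "s \<cdot>\<^sub>v p + t \<cdot>\<^sub>v q = 0\<^sub>v (dim_vec p)" "\<not> (s = 0 \<and> t = 0)"
      unfolding indep2_def by blast
    have lin: "\<And>i. i < n \<Longrightarrow> s * P i + t * Q i = 0"
    proof -
      fix i assume i: "i < n"
      have "col G i \<bullet> (s \<cdot>\<^sub>v p + t \<cdot>\<^sub>v q) = s * P i + t * Q i"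
        unfolding P_def Q_def
        using scalar_prod_add_distrib[OF ci[OF i], of "s \<cdot>\<^sub>v p" "t \<cdot>\<^sub>v q"] pc qc ci[OF i] by simp
      moreover have "col G i \<bullet> (s \<cdot>\<^sub>v p + t \<cdot>\<^sub>v q) = 0" using st(1) pc ci[OF i] by simp
      ultimately show "s * P i + t * Q i = 0" by simp
    qed
    have s0: "s \<noteq> 0"
    proof
      assume "s = 0"
      then have "t \<noteq> 0" "\<And>i. i < n \<Longrightarrow> t * Q i = 0" using st(2) lin by auto
      then show False using ex2 by auto
    qed
    have t0: "t \<noteq> 0"
    proof
      assume "t = 0"
      then have "\<And>i. i < n \<Longrightarrow> s * P i = 0" using lin by auto
      then show False using ex1 s0 by auto
    qed
    have ts: "t = s"
    proof (rule ccontr)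
      assume "t \<noteq> s"
      then have "t = - s" using F(1)[of s] F(1)[of t] s0 t0 by auto
      then have "\<And>i. i < n \<Longrightarrow> s * (P i - Q i) = 0" using lin by (simp add: algebra_simps)
      then have "\<And>i. i < n \<Longrightarrow> P i = Q i" using s0 by auto
      then show False using ex3 by auto
    qed
    have allQ: "\<And>i. i < n \<Longrightarrow> Q i = - P i"
    proof -
      fix i assume i: "i < n"
      have "s * (P i + Q i) = 0" using lin[OF i] ts by (simp add: algebra_simps)
      then have "P i + Q i = 0" using s0 by simp
      then show "Q i = - P i" by (metis add.commute add_eq_0_iff2)
    qed
    obtain i where i: "i < n" "P i \<noteq> 0" using ex1 by auto
    have n2: "(-1::'a) \<noteq> 1" using F(2) by metis
    have "P i \<noteq> - P i" using F(1)[of "P i"] F(2) n2 i(2) by (elim disjE) simp_all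
    moreover have "Q i = - P i" using allQ[OF i(1)] .
    ultimately show ?thesis using i by (metis neg_equal_0_iff_equal)
  qed
  then obtain i where i: "i < n" "P i \<noteq> 0" "Q i \<noteq> 0" "P i \<noteq> Q i" by blast
  have "u $ i \<noteq> v $ i" "v $ i \<noteq> w $ i" "u $ i \<noteq> w $ i" using ui[OF i(1)] vi[OF i(1)] i by auto
  then show "\<exists>i<n. {u $ i, v $ i, w $ i} = UNIV" using F3_univ[OF c] i(1) by blast
qed


theorem theorem6p1:
  fixes G :: "'a::field mat" and k n :: nat
  assumes "card (UNIV :: 'a set) = 3"
    and "G \<in> carrier_mat k n"
    and "vec_space.rank k G = k"
  shows "linear_trifferent_code n (vec_space.row_space n G) \<longleftrightarrow>
         two_blocking_set k ({0\<^sub>v k} \<union> set (cols G) \<union> uminus ` set (cols G))"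
proof -
  have fin: "finite (UNIV :: 'a set)" using assms(1) card.infinite by fastforce
  interpret Vn: vec_space "TYPE('a)" n .
  have rows: "set (rows G) \<subseteq> carrier_vec n" using assms(2) by (auto simp: rows_def)
  have sub: "subspace class_ring (vec_space.row_space n G) (module_vec TYPE('a) n)"
    using Vn.span_is_subspace[OF rows] unfolding Vn.row_space_def by simp
  have "linear_trifferent_code n (vec_space.row_space n G) \<longleftrightarrow> trifferent n (vec_space.row_space n G)"
    unfolding linear_trifferent_code_def using sub by simp
  also have "\<dots> \<longleftrightarrow> core G k n"
    using trifferent_imp_core[OF assms] core_imp_trifferent[OF assms] by blast
  also have "\<dots> \<longleftrightarrow> two_blocking_set k ({0\<^sub>v k} \<union> set (cols G) \<union> uminus ` set (cols G))"
    using blocking_iff_core[OF fin assms(2)] by simp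
  finally show ?thesis .
qed

end
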